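(* Let $V\in\mathcal C(S^1)$ be odd and let $A=I_1\cup\dots\cup I_n\subset S^1$ be a disjoint union of closed intervals $I_j=[\alpha_j,\beta_j]$. Assume that for every continuous $h:S^1\to\mathbb R_{\ge0}$ with $h|_A=0$ one has $(V*h)(\alpha_j)>0$ and $(V*h)(\beta_j)<0$ for all $1\le j\le n$. Let $f:[0,\infty)\times S^1\to\mathbb R_{\ge0}$ be a solution of (TP) with $D=0$ such that $f(0,\cdot)|_A=0$. Then $f(t,\cdot)|_A=0$ for all $t\ge0$; equivalently, $\operatorname{supp}f(0,\cdot)\subset\overline{S^1\setminus A}$ implies $\operatorname{supp}f(t,\cdot)\subset\overline{S^1\setminus A}$ for all $t\ge0$.
   Context: $S^1=\mathbb R/\mathbb Z$; a closed interval $[\alpha,\beta]$ in $S^1$ is a closed connected proper subset with lower end $\alpha$ and upper end $\beta$ (image of $[a,b]\subset\mathbb R$, $b-a<1$). $(V*f)(\theta)=\int_{S^1}V(\theta-\psi)f(\psi)d\psi$. Equation (TP) with $D=0$: $\partial_tf=\partial_\theta((V*f)f)$. *)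

theory Defs
  imports "HOL-Analysis.Analysis"
begin

text \<open>Functions on S^1 = R/Z are represented as 1-periodic functions on the reals.\<close>

definition periodic1 :: "(real \<Rightarrow> 'a) \<Rightarrow> bool" where
  "periodic1 g \<longleftrightarrow> (\<forall>x. g (x + 1) = g x)"

definition circ_conv :: "(real \<Rightarrow> real) \<Rightarrow> (real \<Rightarrow> real) \<Rightarrow> real \<Rightarrow> real" where
  "circ_conv V g \<theta> = integral {0..1} (\<lambda>\<psi>. V (\<theta> - \<psi>) * g \<psi>)"

text \<open>The (lift to R of the) closed interval [a,b] in S^1, for a \<le> b < a + 1.\<close>
definition circ_interval :: "real \<Rightarrow> real \<Rightarrow> real set" where
  "circ_interval a b = {x. \<exists>k::int. a \<le> x + of_int k \<and> x + of_int k \<le> b}"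

text \<open>Classical (C^1) nonnegative solution on [0,oo) x S^1 of
  d_t f = d_theta ((V*f) f), i.e. equation (TP) with D = 0.\<close>
definition tp_solution_D0 :: "(real \<Rightarrow> real) \<Rightarrow> (real \<Rightarrow> real \<Rightarrow> real) \<Rightarrow> bool" where
  "tp_solution_D0 V f \<longleftrightarrow>
     (\<forall>t\<ge>0. periodic1 (f t) \<and> (\<forall>\<theta>. f t \<theta> \<ge> 0)) \<and>
     continuous_on ({0..} \<times> UNIV) (\<lambda>(t, \<theta>). f t \<theta>) \<and>
     (\<exists>ft fx :: real \<times> real \<Rightarrow> real.
        continuous_on ({0..} \<times> UNIV) ft \<and> continuous_on ({0..} \<times> UNIV) fx \<and>
        (\<forall>t\<ge>0. \<forall>\<theta>.
           ((\<lambda>s. f s \<theta>) has_real_derivative ft (t, \<theta>)) (at t within {0..}) \<and>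
           ((\<lambda>x. f t x) has_real_derivative fx (t, \<theta>)) (at \<theta>) \<and>
           ((\<lambda>x. circ_conv V (f t) x * f t x) has_real_derivative ft (t, \<theta>)) (at \<theta>)))"

end

theory Submission
  imports Defs
begin

lemma periodic_int:
  assumes "periodic1 g" shows "g (x + of_int k) = g x"
proof -
  have nat: "g (y + real m) = g y" for y m
    by (induction m arbitrary: y) (use assms in \<open>auto simp: periodic1_def algebra_simps\<close>, metis add.assoc assms periodic1_def)
  show ?thesis
  proof (cases "k \<ge> 0")
    case True then show ?thesis using nat[of x "nat k"] by simp
  next
    case False
    have "g (x + of_int k + real (nat (-k))) = g (x + of_int k)" by (rule nat)
    then show ?thesis using False by simp
  qed
qed

lemma mass_deriv:
  fixes f :: "real \<Rightarrow> real \<Rightarrow> real" and ft :: "real \<times> real \<Rightarrow> real"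
  assumes cft: "continuous_on ({0..} \<times> UNIV) ft"
    and dt: "\<And>t \<theta>. t \<ge> 0 \<Longrightarrow> ((\<lambda>s. f s \<theta>) has_real_derivative ft (t, \<theta>)) (at t within {0..})"
    and dg: "\<And>t \<theta>. t \<ge> 0 \<Longrightarrow> (G t has_real_derivative ft (t, \<theta>)) (at \<theta>)"
    and cf: "\<And>t. t \<ge> 0 \<Longrightarrow> continuous_on UNIV (f t)"
    and ab: "a \<le> b" and t: "t \<ge> 0"
  shows "((\<lambda>s. integral {a..b} (f s)) has_real_derivative (G t b - G t a)) (at t within {0..})"
proof -
  have L: "((\<lambda>s. integral (cbox a b) (f s)) has_real_derivative integral (cbox a b) (\<lambda>\<theta>. ft (t, \<theta>))) (at t within {0..})"
  proof (rule leibniz_rule_field_derivative)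
    show "continuous_on ({0..} \<times> cbox a b) (\<lambda>(x, y). ft (x, y))"
      using cft by (simp add: case_prod_eta) (rule continuous_on_subset, auto)
    show "\<And>x. x \<in> {0..} \<Longrightarrow> f x integrable_on cbox a b"
      using cf by (metis atLeast_iff continuous_on_subset integrable_continuous subset_UNIV)
  qed (use dt t in auto)
  have "((\<lambda>\<theta>. ft (t, \<theta>)) has_integral (G t b - G t a)) {a..b}"
    using ab dg[OF t]
    by (intro fundamental_theorem_of_calculus)
      (auto simp: has_real_derivative_iff_has_vector_derivative[symmetric] intro: has_field_derivative_at_within)
  with L show ?thesis by (simp add: integral_unique)
qed

lemma conv_cont_t:
  fixes f :: "real \<Rightarrow> real \<Rightarrow> real" and ft :: "real \<times> real \<Rightarrow> real"
  assumes cft: "continuous_on ({0..} \<times> UNIV) ft"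
    and dt: "\<And>t \<theta>. t \<ge> 0 \<Longrightarrow> ((\<lambda>s. f s \<theta>) has_real_derivative ft (t, \<theta>)) (at t within {0..})"
    and cf: "\<And>t. t \<ge> 0 \<Longrightarrow> continuous_on UNIV (f t)"
    and cV: "continuous_on UNIV V" and t: "t \<ge> 0"
  shows "continuous (at t within {0..}) (\<lambda>s. circ_conv V (f s) \<theta>)"
proof -
  have L: "((\<lambda>s. integral (cbox 0 1) (\<lambda>\<psi>. V (\<theta> - \<psi>) * f s \<psi>)) has_real_derivative
     integral (cbox 0 1) (\<lambda>\<psi>. V (\<theta> - \<psi>) * ft (t, \<psi>))) (at t within {0..})"
  proof (rule leibniz_rule_field_derivative)
    have c1: "continuous_on ({0..} \<times> cbox 0 1) (\<lambda>p. V (\<theta> - snd p))"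
      by (rule continuous_on_compose2[OF cV]) (auto intro!: continuous_intros)
    have c2: "continuous_on ({0..} \<times> cbox 0 1) ft"
      using cft by (rule continuous_on_subset) auto
    show "continuous_on ({0..} \<times> cbox 0 1) (\<lambda>(x, y). V (\<theta> - y) * ft (x, y))"
      using continuous_on_mult[OF c1 c2] by (simp add: case_prod_beta)
    show "\<And>x. x \<in> {0..} \<Longrightarrow> (\<lambda>\<psi>. V (\<theta> - \<psi>) * f x \<psi>) integrable_on cbox 0 1"
    proof -
      fix x :: real assume "x \<in> {0..}"
      then have "continuous_on UNIV (f x)" using cf by auto
      moreover have "continuous_on UNIV (\<lambda>\<psi>. V (\<theta> - \<psi>))"
        by (rule continuous_on_compose2[OF cV]) (auto intro!: continuous_intros)
      ultimately have "continuous_on UNIV (\<lambda>\<psi>. V (\<theta> - \<psi>) * f x \<psi>)"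
        by (intro continuous_intros)
      then show "(\<lambda>\<psi>. V (\<theta> - \<psi>) * f x \<psi>) integrable_on cbox 0 1"
        by (metis continuous_on_subset integrable_continuous subset_UNIV)
    qed
  qed (use dt t in \<open>auto intro: DERIV_cmult\<close>)
  then show ?thesis unfolding circ_conv_def by (auto dest!: DERIV_continuous)
qed


theorem mainTheorem17:
  fixes V :: "real \<Rightarrow> real" and n :: nat and \<alpha> \<beta> :: "nat \<Rightarrow> real"
    and f :: "real \<Rightarrow> real \<Rightarrow> real"
  assumes V_cont: "continuous_on UNIV V" and V_per: "periodic1 V"
    and V_odd: "\<forall>x. V (- x) = - V x"
    and intervals: "\<forall>j<n. \<alpha> j \<le> \<beta> j \<and> \<beta> j < \<alpha> j + 1"
    and disjoint: "\<forall>i<n. \<forall>j<n. i \<noteq> j \<longrightarrow>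
                     circ_interval (\<alpha> i) (\<beta> i) \<inter> circ_interval (\<alpha> j) (\<beta> j) = {}"
    and drift: "\<forall>h. continuous_on UNIV h \<and> periodic1 h \<and> (\<forall>x. h x \<ge> 0) \<and> (\<exists>x. h x \<noteq> 0) \<and>
                  (\<forall>x \<in> (\<Union>j<n. circ_interval (\<alpha> j) (\<beta> j)). h x = 0)
                  \<longrightarrow> (\<forall>j<n. circ_conv V h (\<alpha> j) > 0 \<and> circ_conv V h (\<beta> j) < 0)"
    and sol: "tp_solution_D0 V f"
    and init: "\<forall>x \<in> (\<Union>j<n. circ_interval (\<alpha> j) (\<beta> j)). f 0 x = 0"
  shows "\<forall>t\<ge>0. \<forall>x \<in> (\<Union>j<n. circ_interval (\<alpha> j) (\<beta> j)). f t x = 0"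
proof -
  from sol obtain ft fx :: "real \<times> real \<Rightarrow> real" where
    base: "\<forall>t\<ge>0. periodic1 (f t) \<and> (\<forall>\<theta>. f t \<theta> \<ge> 0)" and
    cft: "continuous_on ({0..} \<times> UNIV) ft" and
    ders: "\<forall>t\<ge>0. \<forall>\<theta>.
           ((\<lambda>s. f s \<theta>) has_real_derivative ft (t, \<theta>)) (at t within {0..}) \<and>
           ((\<lambda>x. f t x) has_real_derivative fx (t, \<theta>)) (at \<theta>) \<and>
           ((\<lambda>x. circ_conv V (f t) x * f t x) has_real_derivative ft (t, \<theta>)) (at \<theta>)"
    unfolding tp_solution_D0_def by blast
  define u where "u t x = circ_conv V (f t) x" for t x
  define G where "G t x = u t x * f t x" for t x
  have per: "\<And>t. t \<ge> 0 \<Longrightarrow> periodic1 (f t)" and nn: "\<And>t x. t \<ge> 0 \<Longrightarrow> f t x \<ge> 0"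
    using base by auto
  have dt: "\<And>t \<theta>. t \<ge> 0 \<Longrightarrow> ((\<lambda>s. f s \<theta>) has_real_derivative ft (t, \<theta>)) (at t within {0..})"
    using ders by auto
  have dg: "\<And>t \<theta>. t \<ge> 0 \<Longrightarrow> (G t has_real_derivative ft (t, \<theta>)) (at \<theta>)"
    using ders unfolding G_def u_def by auto
  have cf: "\<And>t. t \<ge> 0 \<Longrightarrow> continuous_on UNIV (f t)"
    using ders by (metis DERIV_continuous continuous_at_imp_continuous_on)
  have md: "\<And>a b t. a \<le> b \<Longrightarrow> t \<ge> 0 \<Longrightarrow>
     ((\<lambda>s. integral {a..b} (f s)) has_real_derivative (G t b - G t a)) (at t within {0..})"
    by (rule mass_deriv[OF cft dt dg cf]) auto
  have uc: "\<And>t \<theta>. t \<ge> 0 \<Longrightarrow> continuous (at t within {0..}) (\<lambda>s. u s \<theta>)"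
    unfolding u_def by (rule conv_cont_t[OF cft dt cf V_cont])
  define P where "P t \<longleftrightarrow> (\<forall>j<n. \<forall>x\<in>{\<alpha> j..\<beta> j}. f t x = 0)" for t
  have red: "\<And>t. t \<ge> 0 \<Longrightarrow> P t \<Longrightarrow> \<forall>x \<in> (\<Union>j<n. circ_interval (\<alpha> j) (\<beta> j)). f t x = 0"
  proof -
    fix t :: real assume t: "t \<ge> 0" and Pt: "P t"
    show "\<forall>x \<in> (\<Union>j<n. circ_interval (\<alpha> j) (\<beta> j)). f t x = 0"
    proof
      fix x assume "x \<in> (\<Union>j<n. circ_interval (\<alpha> j) (\<beta> j))"
      then obtain j k where j: "j < n" and k: "\<alpha> j \<le> x + of_int k" "x + of_int k \<le> \<beta> j"
        unfolding circ_interval_def by auto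
      then have "f t (x + of_int k) = 0" using Pt unfolding P_def by auto
      then show "f t x = 0" using periodic_int[OF per[OF t]] by simp
    qed
  qed
  have P0: "P 0"
    unfolding P_def
  proof (intro allI impI ballI)
    fix j x assume "j < n" "x \<in> {\<alpha> j..\<beta> j}"
    then have "x \<in> circ_interval (\<alpha> j) (\<beta> j)"
      unfolding circ_interval_def by (auto intro!: exI[of _ 0])
    then show "f 0 x = 0" using init \<open>j < n\<close> by blast
  qed
  have allP: "\<forall>t\<ge>0. P t"
  proof (rule ccontr)
    assume "\<not> (\<forall>t\<ge>0. P t)"
    define Bad where "Bad = {t. t \<ge> 0 \<and> \<not> P t}"
    define T where "T = Inf Bad"
    obtain t1 where t1: "t1 \<in> Bad" using \<open>\<not> (\<forall>t\<ge>0. P t)\<close> unfolding Bad_def by auto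
    have bdd: "bdd_below Bad" unfolding Bad_def by (rule bdd_belowI[of _ 0]) auto
    have T_le: "\<And>b. b \<in> Bad \<Longrightarrow> T \<le> b" unfolding T_def using bdd by (rule cInf_lower[rotated])
    have T0: "T \<ge> 0" unfolding T_def using t1 by (intro cInf_greatest) (auto simp: Bad_def)
    have before: "\<And>s. 0 \<le> s \<Longrightarrow> s < T \<Longrightarrow> P s"
      using T_le unfolding Bad_def by force
    have PT: "P T"
    proof (cases "T = 0")
      case True then show ?thesis using P0 by simp
    next
      case False
      then have Tpos: "T > 0" using T0 by simp
      show ?thesis unfolding P_def
      proof (intro allI impI ballI)
        fix j x assume j: "j < n" and x: "x \<in> {\<alpha> j..\<beta> j}"
        show "f T x = 0"
        proof (rule ccontr)
          assume ne: "f T x \<noteq> 0"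
          have "continuous (at T within {0..}) (\<lambda>s. f s x)"
            using dt[OF T0] by (rule DERIV_continuous)
          then obtain d where d: "d > 0" "\<And>s. s \<in> {0..} \<Longrightarrow> dist s T < d \<Longrightarrow> dist (f s x) (f T x) < \<bar>f T x\<bar>"
            unfolding continuous_within_eps_delta using ne by (metis zero_less_abs_iff)
          define s where "s = max 0 (T - d/2)"
          have "s \<ge> 0" "s < T" "dist s T < d" using d Tpos unfolding s_def dist_real_def by auto
          then have "f s x = 0" using before j x unfolding P_def by auto
          with d(2)[of s] \<open>s \<ge> 0\<close> \<open>dist s T < d\<close> show False by (simp add: dist_real_def)
        qed
      qed
    qed
    have "\<not> P t1" "t1 \<ge> 0" using t1 unfolding Bad_def by auto
    then obtain j0 x0 where j0: "j0 < n" "x0 \<in> {\<alpha> j0..\<beta> j0}" "f t1 x0 \<noteq> 0"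
      unfolding P_def by auto
    show False
    proof (cases "\<forall>x. f T x = 0")
      case True
      have mz: "\<And>t. t \<ge> 0 \<Longrightarrow> ((\<lambda>s. integral {0..1} (f s)) has_real_derivative 0) (at t within {0..})"
      proof -
        fix t :: real assume t: "t \<ge> 0"
        have "f t 1 = f t 0" using per[OF t] unfolding periodic1_def by (metis add_0)
        moreover have "u t 1 = u t 0"
        proof -
          have "\<And>\<psi>. V (- \<psi> + 1) = V (- \<psi>)" using V_per unfolding periodic1_def by blast
          then have "\<And>\<psi>. V (1 - \<psi>) = V (0 - \<psi>)" by (simp add: add.commute)
          then show ?thesis unfolding u_def circ_conv_def by simp
        qed
        ultimately have "G t 1 - G t 0 = 0" unfolding G_def by simp
        then show "((\<lambda>s. integral {0..1} (f s)) has_real_derivative 0) (at t within {0..})"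
          using md[of 0 1 t] t by simp
      qed
      obtain c where c: "\<forall>x\<in>{0::real..}. integral {0..1} (f x) = c"
        using has_field_derivative_zero_constant[of "{0::real..}" "\<lambda>s. integral {0..1} (f s)"] mz by auto
      have "f T = (\<lambda>_. 0)" using True by auto
      then have "integral {0..1} (f T) = 0" by simp
      then have "integral {0..1} (f t1) = 0" using c T0 \<open>t1 \<ge> 0\<close> by auto
      then have z: "\<forall>y\<in>cbox 0 1. f t1 y = 0"
        using integral_cbox_eq_0_iff[of 0 1 "f t1"] cf[OF \<open>t1 \<ge> 0\<close>] nn[OF \<open>t1 \<ge> 0\<close>]
        by (auto intro: continuous_on_subset)
      have "f t1 (x0 - of_int (floor x0)) = 0"
      proof -
        have "0 \<le> x0 - of_int (floor x0)" "x0 - of_int (floor x0) \<le> 1"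
          by (simp_all add: floor_le_iff) (smt (verit) real_of_int_floor_add_one_gt)
        then show ?thesis using z by auto
      qed
      then show False using periodic_int[OF per[OF \<open>t1 \<ge> 0\<close>], of "x0 - of_int (floor x0)" "floor x0"] j0 by simp
    next
      case False
      have hz: "\<forall>x \<in> (\<Union>j<n. circ_interval (\<alpha> j) (\<beta> j)). f T x = 0" by (rule red[OF T0 PT])
      have Q: "\<forall>j<n. u T (\<alpha> j) > 0 \<and> u T (\<beta> j) < 0"
        using drift[rule_format, of "f T"] cf[OF T0] per[OF T0] nn[OF T0] False hz unfolding u_def by auto
      have ev: "eventually (\<lambda>s. \<forall>j\<in>{..<n}. u s (\<alpha> j) > 0 \<and> u s (\<beta> j) < 0) (at T within {0..})"
      proof (rule eventually_ball_finite, simp, intro ballI eventually_conj)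
        fix j assume "j \<in> {..<n}"
        then have "u T (\<alpha> j) > 0" "u T (\<beta> j) < 0" using Q by auto
        then show "\<forall>\<^sub>F s in at T within {0..}. 0 < u s (\<alpha> j)" "\<forall>\<^sub>F s in at T within {0..}. u s (\<beta> j) < 0"
          using uc[OF T0, of "\<alpha> j"] uc[OF T0, of "\<beta> j"]
          by (auto simp: continuous_within intro: order_tendstoD)
      qed
      then obtain d where d: "d > 0" "\<And>s. s \<in> {0..} \<Longrightarrow> s \<noteq> T \<Longrightarrow> dist s T < d \<Longrightarrow>
          (\<forall>j\<in>{..<n}. u s (\<alpha> j) > 0 \<and> u s (\<beta> j) < 0)"
        unfolding eventually_at by auto
      have Qs: "\<And>s j. T \<le> s \<Longrightarrow> s < T + d \<Longrightarrow> j < n \<Longrightarrow> u s (\<alpha> j) > 0 \<and> u s (\<beta> j) < 0"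
      proof -
        fix s j assume "T \<le> s" "s < T + d" "j < n"
        then show "u s (\<alpha> j) > 0 \<and> u s (\<beta> j) < 0"
          using Q d(2)[of s] T0 by (cases "s = T") (auto simp: dist_real_def)
      qed
      have Ps: "P s" if s: "T \<le> s" "s < T + d" for s
        unfolding P_def
      proof (intro allI impI ballI)
        fix j x assume j: "j < n" and x: "x \<in> {\<alpha> j..\<beta> j}"
        have ab: "\<alpha> j \<le> \<beta> j" using x by auto
        show "f s x = 0"
        proof (cases "\<alpha> j = \<beta> j")
          case True then show ?thesis using Q j by auto
        next
          case False
          then have alb: "\<alpha> j < \<beta> j" using ab by simp
          define M where "M r = integral {\<alpha> j..\<beta> j} (f r)" for r
          have Md: "\<And>r. r \<ge> 0 \<Longrightarrow> (M has_real_derivative (G r (\<beta> j) - G r (\<alpha> j))) (at r within {0..})"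
            unfolding M_def using md ab by auto
          have "M T \<ge> M s"
          proof (rule DERIV_nonpos_imp_decreasing_open[of T s M])
            show "T \<le> s" using s by simp
            show "continuous_on {T..s} M"
              unfolding continuous_on_eq_continuous_within
            proof
              fix r assume r: "r \<in> {T..s}"
              then have "r \<ge> 0" using T0 by auto
              then have "continuous (at r within {0..}) M" by (rule DERIV_continuous[OF Md])
              then show "continuous (at r within {T..s}) M"
                by (rule continuous_within_subset) (use T0 in auto)
            qed
            fix r assume r: "T < r" "r < s"
            have r0: "r > 0" using r T0 by linarith
            then have "r \<in> interior {0..}" by (simp add: interior_Ici[of "-1"])
            then have "at r within {0..} = at r" by (rule at_within_interior)
            then have "(M has_real_derivative (G r (\<beta> j) - G r (\<alpha> j))) (at r)"
              using Md[of r] r0 by simp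
            moreover have "G r (\<beta> j) - G r (\<alpha> j) \<le> 0"
              using Qs[of r j] r s j nn[of r "\<beta> j"] nn[of r "\<alpha> j"] T0 unfolding G_def
              by (smt (verit) mult_nonneg_nonneg mult_nonpos_nonneg)
            ultimately show "\<exists>y. (M has_real_derivative y) (at r) \<and> y \<le> 0" by blast
          qed
          moreover have "M T = 0"
          proof -
            have "\<And>y. y \<in> {\<alpha> j..\<beta> j} \<Longrightarrow> f T y = 0" using PT j unfolding P_def by blast
            then have "M T = integral {\<alpha> j..\<beta> j} (\<lambda>_. 0::real)" unfolding M_def by (rule integral_cong)
            then show ?thesis by simp
          qed
          moreover have "M s \<ge> 0" unfolding M_def
            using nn[of s] T0 s cf[of s] by (intro integral_nonneg) (auto intro: integrable_continuous_real continuous_on_subset)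
          ultimately have "integral (cbox (\<alpha> j) (\<beta> j)) (f s) = 0" unfolding M_def by simp
          then show "f s x = 0"
          proof -
            have cs: "continuous_on {\<alpha> j..\<beta> j} (f s)"
              using cf[of s] T0 s by (meson continuous_on_subset order_trans subset_UNIV)
            show ?thesis
              using integral_cbox_eq_0_iff[of "\<alpha> j" "\<beta> j" "f s"] cs nn[of s] T0 s alb x \<open>integral (cbox (\<alpha> j) (\<beta> j)) (f s) = 0\<close>
              by auto
          qed
        qed
      qed
      have "T + d/2 \<le> T"
        unfolding T_def
      proof (rule cInf_greatest)
        show "Bad \<noteq> {}" using t1 by auto
        fix b assume b: "b \<in> Bad"
        then have "T \<le> b" "\<not> P b" using T_le unfolding Bad_def by auto
        then have "\<not> b < T + d" using Ps by auto
        then show "Inf Bad + d / 2 \<le> b" using d(1) unfolding T_def by simp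
      qed
      then show False using d(1) by simp
    qed
  qed
  show ?thesis using red allP by auto
qed

end
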